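(* Let $G$ be a multigraph with unit edge capacities and terminal set ${\mathcal T}$, and let $G'$ be a legal contracted graph for $G$, obtained by contracting the clusters of a collection ${\mathcal C}$. Let $S'\subseteq V(G')\setminus{\mathcal T}$ and $E'\subseteq\operatorname{out}_{G'}(S')$ be such that $S'$ is $\alpha$-well-linked for $E'$ in $G'$, for some $\alpha<1$. Let $S\subseteq V(G)\setminus{\mathcal T}$ be obtained from $S'$ by replacing every super-node $v_C\in S'$ ($C\in{\mathcal C}$) with the vertices of $C$. Then $S$ is $\alpha/3$-well-linked for $E'$ in $G$ (where edges of $G'$ are identified with the corresponding edges of $G$, so that $E'\subseteq\operatorname{out}_G(S)$).
   Context: For a set $A$ of vertices, $\operatorname{out}(A)$ is the set of edges with exactly one endpoint in $A$. A set $A$ is $\alpha$-well-linked for a set $\tilde E\subseteq\operatorname{out}(A)$ if for every partition $(X,Y)$ of $A$, with $T_X=\tilde E\cap\operatorname{out}(X)$ and $T_Y=\tilde E\cap\operatorname{out}(Y)$, $|E(X,Y)|\geq\alpha\min\{|T_X|,|T_Y|\}$; $A$ is $\alpha$-well-linked if it is $\alpha$-well-linked for $\operatorname{out}(A)$. A flow between edges of $\operatorname{out}(S)$ is contained in $S$ if every flow path has its first and last edge in $\operatorname{out}(S)$ and all other edges in $G[S]$. A set $S\subseteq V\setminus{\mathcal T}$ with $|\operatorname{out}(S)|=z$ is a good router if $S$ is $1/3$-well-linked and every pair of edges $e,e'\in\operatorname{out}(S)$ can simultaneously send $1/z$ flow units to each other by a flow contained in $S$ with congestion at most $34$. $G'$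 is a legal contracted graph for $G$ if there is a collection ${\mathcal C}$ of disjoint good routers (containing no terminals) such that $G'$ is obtained from $G$ by contracting each $C\in{\mathcal C}$ into a super-node $v_C$ (self-loops removed, parallel edges kept); each edge of $G'$ corresponds to an edge of $G$. *)

theory Defs
  imports Complex_Main
begin

text \<open>A multigraph: vertex set, edge set (edges are named, so parallel edges are
distinct elements), and an endpoint map. Edges are undirected; the order of the
pair returned by ends is irrelevant for all notions below.\<close>

record ('v, 'e) mgraph =
  verts :: "'v set"
  edges :: "'e set"
  ends  :: "'e \<Rightarrow> 'v \<times> 'v"

definition wf_mgraph :: "('v, 'e) mgraph \<Rightarrow> bool" where
  "wf_mgraph G \<longleftrightarrow> finite (verts G) \<and> finite (edges G) \<and>
     (\<forall>e\<in>edges G. fst (ends G e) \<in> verts G \<and> snd (ends G e) \<in> verts G)"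

definition out :: "('v, 'e) mgraph \<Rightarrow> 'v set \<Rightarrow> 'e set" where
  "out G A = {e \<in> edges G. (fst (ends G e) \<in> A) \<noteq> (snd (ends G e) \<in> A)}"

definition edges_between :: "('v, 'e) mgraph \<Rightarrow> 'v set \<Rightarrow> 'v set \<Rightarrow> 'e set" where
  "edges_between G X Y = {e \<in> edges G.
      (fst (ends G e) \<in> X \<and> snd (ends G e) \<in> Y) \<or> (fst (ends G e) \<in> Y \<and> snd (ends G e) \<in> X)}"

definition well_linked_for :: "('v, 'e) mgraph \<Rightarrow> real \<Rightarrow> 'v set \<Rightarrow> 'e set \<Rightarrow> bool" where
  "well_linked_for G \<alpha> A Et \<longleftrightarrow> Et \<subseteq> out G A \<and>
     (\<forall>X Y. X \<union> Y = A \<longrightarrow> X \<inter> Y = {} \<longrightarrow>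
        real (card (edges_between G X Y)) \<ge>
          \<alpha> * real (min (card (Et \<inter> out G X)) (card (Et \<inter> out G Y))))"

definition well_linked :: "('v, 'e) mgraph \<Rightarrow> real \<Rightarrow> 'v set \<Rightarrow> bool" where
  "well_linked G \<alpha> A \<longleftrightarrow> well_linked_for G \<alpha> A (out G A)"

definition joins :: "('v, 'e) mgraph \<Rightarrow> 'e \<Rightarrow> 'v \<Rightarrow> 'v \<Rightarrow> bool" where
  "joins G e u v \<longleftrightarrow> ends G e = (u, v) \<or> ends G e = (v, u)"

definition is_walk :: "('v, 'e) mgraph \<Rightarrow> 'e list \<Rightarrow> bool" where
  "is_walk G P \<longleftrightarrow> set P \<subseteq> edges G \<and>
     (\<exists>vs. length vs = Suc (length P) \<and>
        (\<forall>i < length P. joins G (P ! i) (vs ! i) (vs ! Suc i)))"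

definition path_in :: "('v, 'e) mgraph \<Rightarrow> 'v set \<Rightarrow> 'e \<Rightarrow> 'e \<Rightarrow> 'e list \<Rightarrow> bool" where
  "path_in G S e e' P \<longleftrightarrow> is_walk G P \<and> length P \<ge> 2 \<and>
     ((hd P = e \<and> last P = e') \<or> (hd P = e' \<and> last P = e)) \<and>
     hd P \<in> out G S \<and> last P \<in> out G S \<and>
     (\<forall>a \<in> set (butlast (tl P)). fst (ends G a) \<in> S \<and> snd (ends G a) \<in> S)"

text \<open>F p P is the amount of flow for the pair p = {e,e'} sent along path P.\<close>
definition all_pairs_routable :: "('v, 'e) mgraph \<Rightarrow> 'v set \<Rightarrow> real \<Rightarrow> bool" where
  "all_pairs_routable G S c \<longleftrightarrow>
    (let z = card (out G S);
         Pairs = {{e, e'} | e e'. e \<in> out G S \<and> e' \<in> out G S \<and> e \<noteq> e'} in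
     \<exists>F :: 'e set \<Rightarrow> 'e list \<Rightarrow> real.
       (\<forall>e\<in>out G S. \<forall>e'\<in>out G S. e \<noteq> e' \<longrightarrow>
          finite {P. F {e, e'} P \<noteq> 0} \<and>
          (\<forall>P. F {e, e'} P \<noteq> 0 \<longrightarrow> F {e, e'} P > 0 \<and> path_in G S e e' P) \<and>
          (\<Sum>P\<in>{P. F {e, e'} P \<noteq> 0}. F {e, e'} P) = 1 / real z) \<and>
       (\<forall>a \<in> edges G.
          (\<Sum>p\<in>Pairs. \<Sum>P\<in>{P. F p P \<noteq> 0}. F p P * real (count_list P a)) \<le> c))"

definition good_router :: "('v, 'e) mgraph \<Rightarrow> 'v set \<Rightarrow> 'v set \<Rightarrow> bool" where
  "good_router G T S \<longleftrightarrow> S \<subseteq> verts G - T \<and> well_linked G (1/3) S \<and>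
     all_pairs_routable G S 34"

definition legal_collection :: "('v, 'e) mgraph \<Rightarrow> 'v set \<Rightarrow> 'v set set \<Rightarrow> bool" where
  "legal_collection G T \<C> \<longleftrightarrow> (\<forall>C\<in>\<C>. good_router G T C) \<and>
     (\<forall>C\<in>\<C>. \<forall>D\<in>\<C>. C \<noteq> D \<longrightarrow> C \<inter> D = {})"

text \<open>Contraction: a vertex v of G is sent to its cluster C if v lies in some C of the
collection (the super-node v_C is represented by the set C itself) and to {v} otherwise.
Self-loops are removed, parallel edges kept; each edge of the contracted graph is the
corresponding edge of G (same edge name).\<close>
definition cl :: "'v set set \<Rightarrow> 'v \<Rightarrow> 'v set" where
  "cl \<C> v = (if \<exists>C\<in>\<C>. v \<in> C then (THE C. C \<in> \<C> \<and> v \<in> C) else {v})"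

definition contract :: "('v, 'e) mgraph \<Rightarrow> 'v set set \<Rightarrow> ('v set, 'e) mgraph" where
  "contract G \<C> =
     \<lparr> verts = cl \<C> ` verts G,
       edges = {e \<in> edges G. cl \<C> (fst (ends G e)) \<noteq> cl \<C> (snd (ends G e))},
       ends = (\<lambda>e. (cl \<C> (fst (ends G e)), cl \<C> (snd (ends G e)))) \<rparr>"

end

theory Submission
  imports Defs
begin

definition disjc :: "'v set set \<Rightarrow> bool" where
  "disjc \<C> \<longleftrightarrow> (\<forall>C\<in>\<C>. \<forall>D\<in>\<C>. C \<noteq> D \<longrightarrow> C \<inter> D = {})"

lemma cl_in:
  assumes "disjc \<C>" "C \<in> \<C>" "v \<in> C"
  shows "cl \<C> v = C"
proof -
  have "(THE C. C \<in> \<C> \<and> v \<in> C) = C"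
    by (rule the_equality) (use assms in \<open>auto simp: disjc_def\<close>)
  then show ?thesis using assms by (auto simp: cl_def)
qed

lemma cl_not: "\<not> (\<exists>C\<in>\<C>. v \<in> C) \<Longrightarrow> cl \<C> v = {v}"
  by (simp add: cl_def)

lemma cl_self: "disjc \<C> \<Longrightarrow> v \<in> cl \<C> v"
  by (metis cl_in cl_not singletonI)

lemma cl_eq:
  assumes "disjc \<C>" "u \<in> cl \<C> w"
  shows "cl \<C> u = cl \<C> w"
proof (cases "\<exists>C\<in>\<C>. w \<in> C")
  case True
  then obtain C where C: "C \<in> \<C>" "w \<in> C" by blast
  then have "cl \<C> w = C" using assms cl_in by metis
  then show ?thesis using assms C cl_in by metis
next
  case False
  then show ?thesis using assms cl_not by fastforce
qed

lemma out_contract: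
  "out (contract G \<C>) A = {e \<in> edges G. cl \<C> (fst (ends G e)) \<noteq> cl \<C> (snd (ends G e)) \<and>
      (cl \<C> (fst (ends G e)) \<in> A) \<noteq> (cl \<C> (snd (ends G e)) \<in> A)}"
  by (auto simp: out_def contract_def)

lemma eb_contract:
  "edges_between (contract G \<C>) A B = {e \<in> edges G. cl \<C> (fst (ends G e)) \<noteq> cl \<C> (snd (ends G e)) \<and>
      ((cl \<C> (fst (ends G e)) \<in> A \<and> cl \<C> (snd (ends G e)) \<in> B) \<or>
       (cl \<C> (fst (ends G e)) \<in> B \<and> cl \<C> (snd (ends G e)) \<in> A))}"
  by (auto simp: edges_between_def contract_def)

lemma out_empty: "out G {} = {}" by (simp add: out_def)

theorem claim3:
  fixes G :: "('v, 'e) mgraph" and T :: "'v set" and \<C> :: "'v set set"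
    and S' :: "'v set set" and E' :: "'e set" and \<alpha> :: real
  assumes "wf_mgraph G"
    and "T \<subseteq> verts G"
    and "legal_collection G T \<C>"
    and "S' \<subseteq> verts (contract G \<C>) - (\<lambda>t. {t}) ` T"
    and "well_linked_for (contract G \<C>) \<alpha> S' E'"
    and "\<alpha> < 1"
  shows "well_linked_for G (\<alpha> / 3) (\<Union> S') E'"
proof -
  define f where "f = cl \<C>"
  define S where "S = \<Union> S'"
  define G' where "G' = contract G \<C>"
  have disj: "disjc \<C>" using assms(3) by (simp add: legal_collection_def disjc_def)
  have fself: "\<And>v. v \<in> f v" using cl_self[OF disj] f_def by simp
  have feq: "\<And>u w. u \<in> f w \<Longrightarrow> f u = f w" using cl_eq[OF disj] f_def by simp
  have S'sub: "S' \<subseteq> f ` verts G" using assms(4) by (auto simp: contract_def f_def)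
  have finV: "finite (verts G)" and finE: "finite (edges G)" using assms(1) by (auto simp: wf_mgraph_def)
  have finS': "finite S'" using S'sub finV finite_subset by blast
  have memS: "\<And>u. u \<in> S \<longleftrightarrow> f u \<in> S'"
  proof -
    fix u
    show "u \<in> S \<longleftrightarrow> f u \<in> S'"
    proof
      assume "u \<in> S"
      then obtain K where K: "K \<in> S'" "u \<in> K" by (auto simp: S_def)
      then obtain w where "K = f w" using S'sub by blast
      then show "f u \<in> S'" using K feq by metis
    next
      assume "f u \<in> S'" then show "u \<in> S" using fself S_def by blast
    qed
  qed
  have Kf: "\<And>K u. K \<in> S' \<Longrightarrow> u \<in> K \<Longrightarrow> f u = K"
    using S'sub feq by blast
  have outG': "\<And>A. out G' A = {e \<in> edges G. f (fst (ends G e)) \<noteq> f (snd (ends G e)) \<and>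
      (f (fst (ends G e)) \<in> A) \<noteq> (f (snd (ends G e)) \<in> A)}"
    unfolding G'_def f_def by (rule out_contract)
  have ebG': "\<And>A B. edges_between G' A B = {e \<in> edges G. f (fst (ends G e)) \<noteq> f (snd (ends G e)) \<and>
      ((f (fst (ends G e)) \<in> A \<and> f (snd (ends G e)) \<in> B) \<or>
       (f (fst (ends G e)) \<in> B \<and> f (snd (ends G e)) \<in> A))}"
    unfolding G'_def f_def by (rule eb_contract)
  have wl: "E' \<subseteq> out G' S'"
    and wl2: "\<And>X Y. X \<union> Y = S' \<Longrightarrow> X \<inter> Y = {} \<Longrightarrow> real (card (edges_between G' X Y)) \<ge>
          \<alpha> * real (min (card (E' \<inter> out G' X)) (card (E' \<inter> out G' Y)))"
    using assms(5) unfolding well_linked_for_def G'_def by auto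
  have E'sub: "E' \<subseteq> out G S"
  proof
    fix e assume "e \<in> E'"
    then have "e \<in> out G' S'" using wl by blast
    then have "e \<in> edges G \<and> (f (fst (ends G e)) \<in> S') \<noteq> (f (snd (ends G e)) \<in> S')"
      unfolding outG' by blast
    then show "e \<in> out G S" by (simp add: out_def memS)
  qed
  have finout: "\<And>A. finite (out G A)" using finE by (simp add: out_def)
  show ?thesis
    unfolding well_linked_for_def S_def[symmetric]
  proof (intro conjI allI impI)
    show "E' \<subseteq> out G S" by (rule E'sub)
    fix X Y assume XY: "X \<union> Y = S" "X \<inter> Y = {}"
    show "real (card (edges_between G X Y)) \<ge>
          \<alpha> / 3 * real (min (card (E' \<inter> out G X)) (card (E' \<inter> out G Y)))"
    proof (cases "\<alpha> < 0")
      case True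
      have "\<alpha> / 3 * real (min (card (E' \<inter> out G X)) (card (E' \<inter> out G Y))) \<le> 0"
        using True by (simp add: mult_nonpos_nonneg)
      then show ?thesis by linarith
    next
      case False
      then have a0: "\<alpha> \<ge> 0" by simp

      define a where "a K = card (out G K \<inter> out G (K \<inter> X))" for K
      define b where "b K = card (out G K \<inter> out G (K \<inter> Y))" for K
      define X' where "X' = {K\<in>S'. b K \<le> a K}"
      define Y' where "Y' = S' - X'"
      define m where "m K = (if K \<in> X' then K \<inter> Y else K \<inter> X)" for K
      define B where "B = (\<Union>K\<in>S'. out G K \<inter> out G (m K))"
      define Ein where "Ein K = edges_between G (K \<inter> X) (K \<inter> Y)" for K
      define Eall where "Eall = edges_between G X Y"
      define EI where "EI = Eall \<inter> {e. f (fst (ends G e)) = f (snd (ends G e))}"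
      define EO where "EO = Eall - EI"
      define C' where "C' = edges_between G' X' Y'"
      have finEall: "finite Eall" using finE by (simp add: Eall_def edges_between_def)
      have finB: "finite B" unfolding B_def using finS' finout by blast
      have minab: "card (out G K \<inter> out G (m K)) = min (a K) (b K)" if "K \<in> S'" for K
        using that by (auto simp: m_def X'_def a_def b_def)
      have KS: "K \<subseteq> S" if "K \<in> S'" for K using that S_def by blast
      have BK: "card (out G K \<inter> out G (m K)) \<le> 3 * card (Ein K)" if K: "K \<in> S'" for K
      proof -
        obtain w where w: "K = f w" "w \<in> verts G" using K S'sub by blast
        show ?thesis
        proof (cases "\<exists>C\<in>\<C>. w \<in> C")
          case True
          then obtain C where C: "C \<in> \<C>" "w \<in> C" by blast
          then have KC: "K = C" using w cl_in[OF disj] f_def by metis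
          have "good_router G T C" using assms(3) C unfolding legal_collection_def by blast
          then have "well_linked G (1/3) K" using KC unfolding good_router_def by blast
          then have WL: "\<forall>X0 Y0. X0 \<union> Y0 = K \<longrightarrow> X0 \<inter> Y0 = {} \<longrightarrow>
             real (card (edges_between G X0 Y0)) \<ge>
             1/3 * real (min (card (out G K \<inter> out G X0)) (card (out G K \<inter> out G Y0)))"
            unfolding well_linked_def well_linked_for_def by blast
          have "(K \<inter> X) \<union> (K \<inter> Y) = K" "(K \<inter> X) \<inter> (K \<inter> Y) = {}"
            using KS[OF K] XY by auto
          then have "real (card (Ein K)) \<ge> 1/3 * real (min (a K) (b K))"
            using WL unfolding Ein_def a_def b_def by blast
          then show ?thesis using minab[OF K] by linarith
        next
          case False
          then have "K = {w}" using w cl_not f_def by metis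
          then have "K \<inter> X = {} \<or> K \<inter> Y = {}" using XY by blast
          then have "a K = 0 \<or> b K = 0" unfolding a_def b_def
            by (metis out_empty inf_bot_right card.empty)
          then show ?thesis using minab[OF K] by auto
        qed
      qed
      have EinI: "Ein K \<subseteq> EI" if K: "K \<in> S'" for K
      proof
        fix e assume "e \<in> Ein K"
        then have e: "e \<in> edges G" "fst (ends G e) \<in> K" "snd (ends G e) \<in> K" "e \<in> Eall"
          by (auto simp: Ein_def Eall_def edges_between_def)
        then have "f (fst (ends G e)) = f (snd (ends G e))" using Kf[OF K] by metis
        then show "e \<in> EI" using e by (simp add: EI_def)
      qed
      have disjEin: "Ein K \<inter> Ein L = {}" if "K \<in> S'" "L \<in> S'" "K \<noteq> L" for K L
      proof -
        have "K \<inter> L = {}" using that Kf by blast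
        then show ?thesis by (auto simp: Ein_def edges_between_def)
      qed
      have finEin: "\<And>K. finite (Ein K)" using finE by (simp add: Ein_def edges_between_def)
      have cardB: "card B \<le> 3 * card EI"
      proof -
        have "card B \<le> (\<Sum>K\<in>S'. card (out G K \<inter> out G (m K)))"
          unfolding B_def by (rule card_UN_le[OF finS'])
        also have "\<dots> \<le> (\<Sum>K\<in>S'. 3 * card (Ein K))" by (rule sum_mono) (use BK in auto)
        also have "\<dots> = 3 * (\<Sum>K\<in>S'. card (Ein K))" by (simp add: sum_distrib_left)
        also have "(\<Sum>K\<in>S'. card (Ein K)) = card (\<Union>K\<in>S'. Ein K)"
          by (rule card_UN_disjoint[symmetric]) (use finS' finEin disjEin in auto)
        also have "card (\<Union>K\<in>S'. Ein K) \<le> card EI"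
          by (rule card_mono) (use finEall EI_def EinI in auto)
        finally show ?thesis by simp
      qed
      have XY'1: "X' \<union> Y' = S'" and XY'2: "X' \<inter> Y' = {}" by (auto simp: X'_def Y'_def)
      have wlC: "real (card C') \<ge> \<alpha> * real (min (card (E' \<inter> out G' X')) (card (E' \<inter> out G' Y')))"
        unfolding C'_def by (rule wl2[OF XY'1 XY'2])
      have X'S: "X' \<subseteq> S'" and Y'S: "Y' \<subseteq> S'" using XY'1 by auto
      have key: "e \<in> EO \<or> e \<in> B" if e: "e \<in> edges G" "f u \<in> X'" "f v \<in> Y'"
        "(fst (ends G e) = u \<and> snd (ends G e) = v) \<or> (fst (ends G e) = v \<and> snd (ends G e) = u)" for e u v
      proof -
        have uS: "u \<in> S" "v \<in> S" using e X'S Y'S memS by auto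
        have fuv: "f u \<noteq> f v" using e XY'2 by auto
        have vnu: "v \<notin> f u" using fuv feq by metis
        have unv: "u \<notin> f v" using fuv feq by metis
        show ?thesis
        proof (cases "u \<in> X \<and> v \<in> Y")
          case True
          then have "e \<in> Eall" using e by (auto simp: Eall_def edges_between_def)
          moreover have "e \<notin> EI" using e fuv by (auto simp: EI_def)
          ultimately show ?thesis by (simp add: EO_def)
        next
          case False
          then have "u \<in> Y \<or> v \<in> X" using uS XY by blast
          then show ?thesis
          proof
            assume uY: "u \<in> Y"
            have "m (f u) = f u \<inter> Y" using e by (simp add: m_def)
            then have "e \<in> out G (f u) \<inter> out G (m (f u))"
              using e uY fself[of u] vnu by (auto simp: out_def)
            then show ?thesis using e X'S unfolding B_def by blast
          next
            assume vX: "v \<in> X"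
            have "m (f v) = f v \<inter> X" using e XY'2 by (auto simp: m_def)
            then have "e \<in> out G (f v) \<inter> out G (m (f v))"
              using e vX fself[of v] unv by (auto simp: out_def)
            then show ?thesis using e Y'S unfolding B_def by blast
          qed
        qed
      qed
      have C'sub: "C' \<subseteq> EO \<union> (B \<inter> C')"
      proof
        fix e assume eC: "e \<in> C'"
        then have "e \<in> edges G \<and> ((f (fst (ends G e)) \<in> X' \<and> f (snd (ends G e)) \<in> Y') \<or>
                     (f (fst (ends G e)) \<in> Y' \<and> f (snd (ends G e)) \<in> X'))"
          unfolding C'_def ebG' by blast
        then have "e \<in> EO \<or> e \<in> B" using key by blast
        then show "e \<in> EO \<union> (B \<inter> C')" using eC by blast
      qed
      have C'E: "C' \<inter> E' = {}"
      proof -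
        have "e \<notin> E'" if "e \<in> C'" for e
        proof -
          have "f (fst (ends G e)) \<in> S'" "f (snd (ends G e)) \<in> S'"
            using that X'S Y'S unfolding C'_def ebG' by blast+
          then have "e \<notin> out G' S'" unfolding outG' by blast
          then show ?thesis using wl by blast
        qed
        then show ?thesis by blast
      qed
      have keyT: "f u \<in> Z'" if e: "e \<in> E'" "e \<notin> B" "u \<in> Z" "f u \<in> S'" "f v \<notin> S'"
        "(fst (ends G e) = u \<and> snd (ends G e) = v) \<or> (fst (ends G e) = v \<and> snd (ends G e) = u)"
        and ZZ: "(Z = X \<and> Z' = X') \<or> (Z = Y \<and> Z' = Y')" for e u v Z Z'
      proof (rule ccontr)
        assume nZ: "f u \<notin> Z'"
        have vS: "v \<notin> f u" using e feq by metis
        have eG: "e \<in> edges G" using e wl by (auto simp: outG')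
        have "m (f u) = f u \<inter> Z" using ZZ nZ e(4) by (auto simp: m_def Y'_def)
        then have "e \<in> out G (f u) \<inter> out G (m (f u))"
          using e eG fself[of u] vS by (auto simp: out_def)
        then show False using e unfolding B_def by blast
      qed
      have TZ: "E' \<inter> out G Z - B \<subseteq> E' \<inter> out G' Z'"
        if ZZ: "(Z = X \<and> Z' = X') \<or> (Z = Y \<and> Z' = Y')" for Z Z'
      proof
        fix e assume e: "e \<in> E' \<inter> out G Z - B"
        have ZS: "Z \<subseteq> S" "Z' \<subseteq> S'" using ZZ XY X'S Y'S by auto
        have eo: "e \<in> edges G" "f (fst (ends G e)) \<noteq> f (snd (ends G e))"
          "(f (fst (ends G e)) \<in> S') \<noteq> (f (snd (ends G e)) \<in> S')"
          using e wl unfolding outG' by blast+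
        have eZ: "(fst (ends G e) \<in> Z) \<noteq> (snd (ends G e) \<in> Z)" using e by (auto simp: out_def)
        show "e \<in> E' \<inter> out G' Z'"
        proof (cases "f (fst (ends G e)) \<in> S'")
          case True
          then have n: "f (snd (ends G e)) \<notin> S'" using eo by blast
          then have "snd (ends G e) \<notin> Z" using ZS memS by blast
          then have "fst (ends G e) \<in> Z" using eZ by blast
          then have "f (fst (ends G e)) \<in> Z'"
            using keyT[of e "fst (ends G e)" Z "snd (ends G e)" Z'] e True n ZZ by blast
          moreover have "f (snd (ends G e)) \<notin> Z'" using n ZS by blast
          ultimately show ?thesis using e eo unfolding outG' by blast
        next
          case False
          then have n: "f (snd (ends G e)) \<in> S'" using eo by blast
          have "fst (ends G e) \<notin> Z" using ZS memS False by blast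
          then have "snd (ends G e) \<in> Z" using eZ by blast
          then have "f (snd (ends G e)) \<in> Z'"
            using keyT[of e "snd (ends G e)" Z "fst (ends G e)" Z'] e False n ZZ by blast
          moreover have "f (fst (ends G e)) \<notin> Z'" using False ZS by blast
          ultimately show ?thesis using e eo unfolding outG' by blast
        qed
      qed
      have "out G' S' \<subseteq> edges G" unfolding outG' by blast
      then have "E' \<subseteq> edges G" using wl by (rule order_trans[rotated])
      then have finE': "finite E'" using finE by (rule finite_subset)
      have cardT: "card (E' \<inter> out G Z) \<le> card (E' \<inter> out G' Z') + card (B \<inter> E')"
        if ZZ: "(Z = X \<and> Z' = X') \<or> (Z = Y \<and> Z' = Y')" for Z Z'
      proof -
        have "E' \<inter> out G Z \<subseteq> (E' \<inter> out G' Z') \<union> (B \<inter> E')" using TZ[OF ZZ] by blast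
        then have "card (E' \<inter> out G Z) \<le> card ((E' \<inter> out G' Z') \<union> (B \<inter> E'))"
          by (rule card_mono[rotated]) (use finE' in auto)
        also have "\<dots> \<le> card (E' \<inter> out G' Z') + card (B \<inter> E')" by (rule card_Un_le)
        finally show ?thesis .
      qed
      have finC': "finite C'" using finE by (simp add: C'_def ebG')
      have cardC: "card C' \<le> card EO + card (B \<inter> C')"
      proof -
        have "card C' \<le> card (EO \<union> (B \<inter> C'))"
          by (rule card_mono[OF _ C'sub]) (use finEall finC' EO_def in auto)
        also have "\<dots> \<le> card EO + card (B \<inter> C')" by (rule card_Un_le)
        finally show ?thesis .
      qed
      have cardBB: "card (B \<inter> E') + card (B \<inter> C') \<le> card B"
      proof -
        have "card (B \<inter> E') + card (B \<inter> C') = card ((B \<inter> E') \<union> (B \<inter> C'))"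
          by (rule card_Un_disjoint[symmetric]) (use finB C'E in auto)
        also have "\<dots> \<le> card B" by (rule card_mono[OF finB]) auto
        finally show ?thesis .
      qed
      have cardAll: "card Eall = card EI + card EO"
      proof -
        have "Eall = EI \<union> EO" "EI \<inter> EO = {}" by (auto simp: EO_def EI_def)
        then show ?thesis using finEall card_Un_disjoint[of EI EO]
          by (metis finite_Un)
      qed
      define t where "t = min (card (E' \<inter> out G X)) (card (E' \<inter> out G Y))"
      define t' where "t' = min (card (E' \<inter> out G' X')) (card (E' \<inter> out G' Y'))"
      define n where "n = card (B \<inter> E')"
      have tt: "t \<le> t' + n" using cardT[of X X'] cardT[of Y Y'] unfolding t_def t'_def n_def by auto
      have "\<alpha> * real t \<le> \<alpha> * (real t' + real n)"
        using tt a0 by (intro mult_left_mono) auto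
      moreover have "\<alpha> * real n \<le> real n" using assms(6) mult_right_mono[of \<alpha> 1 "real n"] by simp
      moreover have "\<alpha> * real t' \<le> real (card C')" using wlC t'_def by simp
      ultimately have "\<alpha> * real t \<le> real (card C') + real n" by (simp add: distrib_left)
      then have "\<alpha> * real t \<le> 3 * real (card Eall)"
        using cardC cardBB cardB cardAll unfolding n_def by linarith
      then show ?thesis unfolding Eall_def t_def by simp
    qed
  qed
qed

end
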